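(* Under the setting and hypotheses of Theorem 1 (state-feedback protocol, all roots of $s^{m-1}+a_{m-1}s^{m-2}+\cdots+a_1$ with strictly negative real part, $\mathcal{G}_{\sigma(t)}$ uniformly jointly quasi-strongly connected), assume in addition that every graph $\mathcal{G}_k$, $k\in\mathcal{S}$, is balanced, i.e. $1_N^TL_{\mathcal{G}_k}=0_N^T$. Then for every initial condition, $$\lim_{t\to\infty}x_i(t)=\Big(\frac{1}{a_1N}\sum_{j=1}^N K_2x_j(0),\,0,\dots,0\Big)^T,\qquad i=1,\dots,N.$$
   Context: Agents: $\dot x_i=Ax_i+Bu_i$, $x_i\in\mathbb{R}^m$, $m\ge2$, where $A$ has ones on the superdiagonal and zeros elsewhere and $B=(0,\dots,0,1)^T$. Protocol: $u_i=K_1x_i-\sum_{j\in\mathcal{N}_i(\sigma(t))}\alpha^{ij}_{\sigma(t)}K_2(x_i-x_j)$ with $K_1=(0,-a_1,\dots,-a_{m-1})$, $K_2=(a_1,\dots,a_{m-1},1)$. Switching digraphs $\mathcal{G}_{\sigma(t)}$ from a finite family with positive edge weights $\alpha^{ij}_k$ (edge $e_{ij}$: $i$ receives from $j$, no self-loops), piecewise constant $\sigma$ with dwell time bounded below by $\tau_D>0$. Laplacian $L_{\mathcal{G}_k}$: off-diagonal entry $(i,j)$ equals $-\alpha^{ij}_k$, diagonal entry $(i,i)$ equals $\sum_{j\in\mathcal{N}_i(k)}\alpha^{ij}_k$. Uniformly jointly quasi-strongly connected: there is $T>0$ such that for every $t\ge0$ the union of edges of $\mathcal{G}_{\sigma(s)}$,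 $s\in[t,t+T)$, forms a digraph with a node from which every other node is reachable by a directed path. *)

theory Defs
  imports "HOL-Analysis.Analysis" "HOL-Computational_Algebra.Polynomial"
begin

(* Conventions: agents are indexed 0..N-1, state components 0..m-1 (0-based),
   so x_i = (x_i 0, ..., x_i (m-1)).  The coefficients a_1..a_{m-1} are a 1 .. a (m-1). *)

definition char_poly :: "nat \<Rightarrow> (nat \<Rightarrow> real) \<Rightarrow> complex poly" where
  "char_poly m a = monom 1 (m - 1) + (\<Sum>k\<in>{1..m-1}. monom (complex_of_real (a k)) (k - 1))"

definition K1 :: "nat \<Rightarrow> (nat \<Rightarrow> real) \<Rightarrow> nat \<Rightarrow> real" where
  "K1 m a l = (if l = 0 then 0 else - a l)"

definition K2 :: "nat \<Rightarrow> (nat \<Rightarrow> real) \<Rightarrow> nat \<Rightarrow> real" where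
  "K2 m a l = (if l < m - 1 then a (l + 1) else 1)"

definition rowmul :: "nat \<Rightarrow> (nat \<Rightarrow> real) \<Rightarrow> (nat \<Rightarrow> real) \<Rightarrow> real" where
  "rowmul m K v = (\<Sum>l<m. K l * v l)"

text \<open>Component k of A v (A has ones on the superdiagonal).\<close>
definition Amul :: "nat \<Rightarrow> (nat \<Rightarrow> real) \<Rightarrow> nat \<Rightarrow> real" where
  "Amul m v k = (if k + 1 < m then v (k + 1) else 0)"

text \<open>Component k of B u, with B = (0,...,0,1)^T.\<close>
definition Bmul :: "nat \<Rightarrow> real \<Rightarrow> nat \<Rightarrow> real" where
  "Bmul m u k = (if k = m - 1 then u else 0)"

text \<open>Graph k has edge e_ij (i receives from j) iff alpha k i j > 0.
  Laplacian of graph k: diagonal = sum of incoming weights, off-diagonal = - alpha.\<close>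
definition laplacian :: "nat \<Rightarrow> ('k \<Rightarrow> nat \<Rightarrow> nat \<Rightarrow> real) \<Rightarrow> 'k \<Rightarrow> nat \<Rightarrow> nat \<Rightarrow> real" where
  "laplacian N \<alpha> k i j = (if i = j then (\<Sum>l\<in>{l. l < N \<and> \<alpha> k i l > 0}. \<alpha> k i l) else - \<alpha> k i j)"

definition balanced :: "nat \<Rightarrow> ('k \<Rightarrow> nat \<Rightarrow> nat \<Rightarrow> real) \<Rightarrow> 'k \<Rightarrow> bool" where
  "balanced N \<alpha> k \<longleftrightarrow> (\<forall>j<N. (\<Sum>i<N. laplacian N \<alpha> k i j) = 0)"

definition protocol ::
  "nat \<Rightarrow> nat \<Rightarrow> (nat \<Rightarrow> real) \<Rightarrow> ('k \<Rightarrow> nat \<Rightarrow> nat \<Rightarrow> real) \<Rightarrow> 'k \<Rightarrow> (nat \<Rightarrow> nat \<Rightarrow> real) \<Rightarrow> nat \<Rightarrow> real" where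
  "protocol N m a \<alpha> k X i =
     rowmul m (K1 m a) (X i)
     - (\<Sum>j\<in>{j. j < N \<and> \<alpha> k i j > 0}. \<alpha> k i j * rowmul m (K2 m a) (\<lambda>l. X i l - X j l))"

definition closed_loop ::
  "nat \<Rightarrow> nat \<Rightarrow> (nat \<Rightarrow> real) \<Rightarrow> ('k \<Rightarrow> nat \<Rightarrow> nat \<Rightarrow> real) \<Rightarrow> 'k \<Rightarrow> (nat \<Rightarrow> nat \<Rightarrow> real) \<Rightarrow> nat \<Rightarrow> nat \<Rightarrow> real" where
  "closed_loop N m a \<alpha> k X i l = Amul m (X i) l + Bmul m (protocol N m a \<alpha> k X i) l"

definition dwell_switching :: "real \<Rightarrow> (real \<Rightarrow> 'k) \<Rightarrow> (nat \<Rightarrow> real) \<Rightarrow> bool" where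
  "dwell_switching \<tau>D \<sigma> ts \<longleftrightarrow> ts 0 = 0 \<and> (\<forall>n. ts (Suc n) - ts n \<ge> \<tau>D) \<and>
     (\<forall>n t. ts n \<le> t \<and> t < ts (Suc n) \<longrightarrow> \<sigma> t = \<sigma> (ts n))"

text \<open>Union digraph over [t, t+T): pair (j,i) means an edge e_ij, i.e. information flows from j to i.\<close>
definition union_edges :: "nat \<Rightarrow> ('k \<Rightarrow> nat \<Rightarrow> nat \<Rightarrow> real) \<Rightarrow> (real \<Rightarrow> 'k) \<Rightarrow> real \<Rightarrow> real \<Rightarrow> (nat \<times> nat) set" where
  "union_edges N \<alpha> \<sigma> t T = {(j, i). i < N \<and> j < N \<and> (\<exists>s. t \<le> s \<and> s < t + T \<and> \<alpha> (\<sigma> s) i j > 0)}"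

definition UJQSC :: "nat \<Rightarrow> ('k \<Rightarrow> nat \<Rightarrow> nat \<Rightarrow> real) \<Rightarrow> (real \<Rightarrow> 'k) \<Rightarrow> bool" where
  "UJQSC N \<alpha> \<sigma> \<longleftrightarrow> (\<exists>T>0. \<forall>t\<ge>0. \<exists>r<N. \<forall>v<N. (r, v) \<in> (union_edges N \<alpha> \<sigma> t T)\<^sup>*)"

end

theory Submission
  imports Defs "HOL-Computational_Algebra.Fundamental_Theorem_Algebra"
begin

lemma mon:
  fixes g g' :: "real \<Rightarrow> real"
  assumes "a \<le> b" "finite F" "continuous_on {a..b} g"
    and "\<And>t. t \<in> {a<..<b} - F \<Longrightarrow> (g has_real_derivative g' t) (at t) \<and> g' t \<le> 0"
  shows "g b \<le> g a"
proof -
  let ?h = "\<lambda>t. if t \<in> {a<..<b} - F then g' t else 0"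
  have "(?h has_integral (g b - g a)) {a..b}"
    apply (rule fundamental_theorem_of_calculus_interior_strong[OF assms(2,1) _ assms(3)])
    using assms(4) by (auto simp: has_real_derivative_iff_has_vector_derivative[symmetric])
  moreover have "?h t \<le> 0" for t using assms(4) by auto
  ultimately show ?thesis using has_integral_le[OF _ has_integral_0, of ?h "g b - g a" "{a..b}"] by auto
qed

lemma Re_deriv:
  assumes "(g has_vector_derivative d) (at t)"
  shows "((\<lambda>s. Re (g s)) has_real_derivative Re d) (at t)"
  using bounded_linear.has_vector_derivative[OF bounded_linear_Re assms]
  by (simp add: has_real_derivative_iff_has_vector_derivative)

lemma Im_deriv:
  assumes "(g has_vector_derivative d) (at t)"
  shows "((\<lambda>s. Im (g s)) has_real_derivative Im d) (at t)"
  using bounded_linear.has_vector_derivative[OF bounded_linear_Im assms]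
  by (simp add: has_real_derivative_iff_has_vector_derivative)

lemma scalar_conv:
  fixes u f :: "real \<Rightarrow> complex" and lam F :: complex and E :: "real set"
  assumes lam: "Re lam < 0" and E: "\<And>b. finite (E \<inter> {..b})"
    and cu: "continuous_on {0..} u"
    and du: "\<And>t. 0 < t \<Longrightarrow> t \<notin> E \<Longrightarrow> (u has_vector_derivative (lam * u t + f t)) (at t)"
    and lf: "(f \<longlongrightarrow> F) at_top"
  shows "(u \<longlongrightarrow> - F / lam) at_top"
proof -
  have lam0: "lam \<noteq> 0" using lam by auto
  define g where "g t = u t + F / lam" for t
  define w where "w t = (Re (g t))\<^sup>2 + (Im (g t))\<^sup>2" for t
  define \<mu> where "\<mu> = - Re lam"
  have mu: "\<mu> > 0" using lam \<mu>_def by auto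
  have wc: "w t = (cmod (g t))\<^sup>2" for t by (simp add: w_def cmod_power2)
  have dg: "(g has_vector_derivative (lam * g t + (f t - F))) (at t)" if "0 < t" "t \<notin> E" for t
  proof -
    have "(g has_vector_derivative (lam * u t + f t)) (at t)"
      unfolding g_def using du[OF that] by (auto intro!: derivative_eq_intros)
    moreover have "lam * u t + f t = lam * g t + (f t - F)" using lam0 by (simp add: g_def field_simps)
    ultimately show ?thesis by simp
  qed
  define w' where "w' t = 2 * (Re (g t) * Re (lam * g t + (f t - F)) + Im (g t) * Im (lam * g t + (f t - F)))" for t
  have dw: "(w has_real_derivative w' t) (at t)" if "0 < t" "t \<notin> E" for t
  proof -
    note d = dg[OF that]
    note D = DERIV_add[OF DERIV_mult[OF Re_deriv[OF d] Re_deriv[OF d]] DERIV_mult[OF Im_deriv[OF d] Im_deriv[OF d]]]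
    have e1: "w = (\<lambda>s. Re (g s) * Re (g s) + Im (g s) * Im (g s))" by (simp add: w_def[abs_def] power2_eq_square)
    have e2: "w' t = Re (lam * g t + (f t - F)) * Re (g t) + Re (lam * g t + (f t - F)) * Re (g t) +
        (Im (lam * g t + (f t - F)) * Im (g t) + Im (lam * g t + (f t - F)) * Im (g t))"
      unfolding w'_def by (simp only: algebra_simps mult_2)
    show ?thesis unfolding e1 e2 by (rule D)
  qed
  have w'_bound: "w' t \<le> - \<mu> * w t + \<eta>\<^sup>2 / \<mu>" if "cmod (f t - F) \<le> \<eta>" for t \<eta>
  proof -
    define h where "h = f t - F"
    have e1: "Re (g t) * Re (lam * g t + h) + Im (g t) * Im (lam * g t + h)
        = Re lam * w t + (Re (g t) * Re h + Im (g t) * Im h)"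
      by (simp add: w_def power2_eq_square algebra_simps)
    have cs: "Re (g t) * Re h + Im (g t) * Im h \<le> cmod (g t) * cmod h"
    proof -
      have "Re (g t) * Re h + Im (g t) * Im h = Re (cnj (g t) * h)" by simp
      also have "\<dots> \<le> cmod (cnj (g t) * h)" by (rule complex_Re_le_cmod)
      also have "\<dots> = cmod (g t) * cmod h" by (simp add: norm_mult)
      finally show ?thesis .
    qed
    have "cmod (g t) * cmod h \<le> cmod (g t) * \<eta>" using that h_def by (simp add: mult_left_mono)
    moreover have "2 * (cmod (g t) * \<eta>) \<le> \<mu> * (cmod (g t))\<^sup>2 + \<eta>\<^sup>2 / \<mu>"
    proof -
      have "0 \<le> (\<mu> * cmod (g t) - \<eta>)\<^sup>2 / \<mu>" using mu by simp
      also have "(\<mu> * cmod (g t) - \<eta>)\<^sup>2 / \<mu> = \<mu> * (cmod (g t))\<^sup>2 + \<eta>\<^sup>2 / \<mu> - 2 * (cmod (g t) * \<eta>)"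
        using mu by (simp add: power2_eq_square field_simps)
      finally show ?thesis by simp
    qed
    ultimately show ?thesis using e1 cs unfolding w'_def h_def[symmetric] wc \<mu>_def by (simp add: algebra_simps)
  qed
  have cg: "continuous_on {0..} g" unfolding g_def by (intro continuous_intros cu)
  have cw: "continuous_on {0..} w" unfolding w_def by (intro continuous_intros cg)
  have main: "\<forall>\<^sub>F t in at_top. cmod (g t) < \<epsilon>" if eps: "\<epsilon> > 0" for \<epsilon>
  proof -
    define \<eta> where "\<eta> = \<mu> * \<epsilon> / 2"
    define K where "K = \<eta>\<^sup>2 / \<mu>\<^sup>2"
    have K: "K = \<epsilon>\<^sup>2 / 4" using mu by (simp add: K_def \<eta>_def power2_eq_square field_simps)
    have "\<eta> > 0" using mu eps by (simp add: \<eta>_def)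
    then have "\<forall>\<^sub>F t in at_top. dist (f t) F < \<eta>" using lf tendsto_iff by blast
    then obtain t0 where t0: "\<And>t. t \<ge> t0 \<Longrightarrow> dist (f t) F < \<eta>" by (auto simp: eventually_at_top_linorder)
    define t1 where "t1 = max t0 1"
    have t1: "t1 > 0" "\<And>t. t \<ge> t1 \<Longrightarrow> cmod (f t - F) \<le> \<eta>"
      using t0 by (auto simp: t1_def dist_norm less_imp_le)
    have bound: "w t \<le> K + \<bar>w t1\<bar> / exp (\<mu> * (t - t1))" if tt: "t \<ge> t1" for t
    proof -
      define \<phi> where "\<phi> s = (w s - K) * exp (\<mu> * s)" for s
      have "\<phi> t \<le> \<phi> t1"
      proof (rule mon[of t1 t "E \<inter> {..t}" \<phi> "\<lambda>s. (w' s + \<mu> * (w s - K)) * exp (\<mu> * s)"])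
        show "t1 \<le> t" by fact
        show "finite (E \<inter> {..t})" by (rule E)
        show "continuous_on {t1..t} \<phi>" unfolding \<phi>_def
          by (intro continuous_intros continuous_on_subset[OF cw]) (use t1 in auto)
        fix s assume s: "s \<in> {t1<..<t} - E \<inter> {..t}"
        then have s0: "0 < s" "s \<notin> E" using t1 by auto
        have "(\<phi> has_real_derivative (w' s * exp (\<mu> * s) + (w s - K) * (exp (\<mu> * s) * \<mu>))) (at s)"
          unfolding \<phi>_def by (auto intro!: derivative_eq_intros dw[OF s0])
        moreover have "(w' s + \<mu> * (w s - K)) * exp (\<mu> * s) \<le> 0"
        proof -
          have "w' s \<le> - \<mu> * w s + \<eta>\<^sup>2 / \<mu>" using w'_bound t1(2) s by auto
          moreover have "\<eta>\<^sup>2 / \<mu> = \<mu> * K" using mu by (simp add: K_def power2_eq_square)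
          ultimately have "w' s + \<mu> * (w s - K) \<le> 0" by (simp add: algebra_simps)
          then show ?thesis by (simp add: mult_nonpos_nonneg)
        qed
        ultimately show "(\<phi> has_real_derivative (w' s + \<mu> * (w s - K)) * exp (\<mu> * s)) (at s) \<and>
          (w' s + \<mu> * (w s - K)) * exp (\<mu> * s) \<le> 0" by (simp add: algebra_simps)
      qed
      then have "(w t - K) * exp (\<mu> * t) \<le> (w t1 - K) * exp (\<mu> * t1)" by (simp add: \<phi>_def)
      then have "w t - K \<le> (w t1 - K) * exp (\<mu> * t1) / exp (\<mu> * t)" by (simp add: pos_le_divide_eq)
      also have "\<dots> = (w t1 - K) / exp (\<mu> * (t - t1))" by (simp add: right_diff_distrib exp_diff)
      also have "\<dots> \<le> \<bar>w t1\<bar> / exp (\<mu> * (t - t1))"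
        using K by (intro divide_right_mono) (auto simp: K_def w_def)
      finally show ?thesis by simp
    qed
    define t2 where "t2 = t1 + 4 * \<bar>w t1\<bar> / (\<epsilon>\<^sup>2 * \<mu>) + 1"
    show ?thesis unfolding eventually_at_top_linorder
    proof (intro exI allI impI)
      fix t assume tt: "t \<ge> t2"
      then have tt1: "t \<ge> t1" using mu eps by (simp add: t2_def) (smt (verit) divide_nonneg_pos mult_pos_pos zero_less_power abs_ge_zero)
      have "exp (\<mu> * (t - t1)) \<ge> 1 + \<mu> * (t - t1)" by (rule exp_ge_add_one_self)
      moreover have "\<mu> * (t - t1) \<ge> \<mu> * (4 * \<bar>w t1\<bar> / (\<epsilon>\<^sup>2 * \<mu>))" using tt mu by (intro mult_left_mono) (auto simp: t2_def)
      moreover have "\<mu> * (4 * \<bar>w t1\<bar> / (\<epsilon>\<^sup>2 * \<mu>)) = 4 * \<bar>w t1\<bar> / \<epsilon>\<^sup>2" using mu by simp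
      ultimately have ex: "exp (\<mu> * (t - t1)) > 4 * \<bar>w t1\<bar> / \<epsilon>\<^sup>2" by linarith
      have "\<bar>w t1\<bar> / exp (\<mu> * (t - t1)) \<le> \<epsilon>\<^sup>2 / 4"
      proof -
        have "\<bar>w t1\<bar> = (4 * \<bar>w t1\<bar> / \<epsilon>\<^sup>2) * (\<epsilon>\<^sup>2 / 4)" using eps by simp
        also have "\<dots> \<le> exp (\<mu> * (t - t1)) * (\<epsilon>\<^sup>2 / 4)" using ex eps by (intro mult_right_mono) auto
        finally have "\<bar>w t1\<bar> \<le> exp (\<mu> * (t - t1)) * (\<epsilon>\<^sup>2 / 4)" .
        then show "\<bar>w t1\<bar> / exp (\<mu> * (t - t1)) \<le> \<epsilon>\<^sup>2 / 4" by (simp add: divide_le_eq mult.commute)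
      qed
      then have "(cmod (g t))\<^sup>2 < \<epsilon>\<^sup>2" using bound[OF tt1] K eps wc[of t]
      proof -
        have "0 < \<epsilon>\<^sup>2" using eps by simp
        then show ?thesis using bound[OF tt1] K wc[of t] \<open>\<bar>w t1\<bar> / exp (\<mu> * (t - t1)) \<le> \<epsilon>\<^sup>2 / 4\<close> by linarith
      qed
      then show "cmod (g t) < \<epsilon>" using eps by (meson abs_ge_zero norm_ge_zero power_less_imp_less_base less_imp_le)
    qed
  qed
  show ?thesis unfolding tendsto_iff
  proof (intro allI impI)
    fix \<epsilon> :: real assume "\<epsilon> > 0"
    from main[OF this] show "\<forall>\<^sub>F t in at_top. dist (u t) (- F / lam) < \<epsilon>"
      by eventually_elim (simp add: g_def dist_norm)
  qed
qed

lemma coeff_lin_mult: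
  fixes q :: "complex poly"
  shows "coeff ([:- c, 1:] * q) k = (if k = 0 then 0 else coeff q (k - 1)) - c * coeff q k"
  by (cases k) (simp_all add: algebra_simps)

lemma chain_conv:
  fixes p :: "complex poly" and w :: "nat \<Rightarrow> real \<Rightarrow> complex" and y :: "real \<Rightarrow> complex"
  assumes "degree p = n" "n \<ge> 1" "lead_coeff p = 1" "\<forall>z. poly p z = 0 \<longrightarrow> Re z < 0"
    and E: "\<And>b. finite (E \<inter> {..b})"
    and "\<forall>l<n. continuous_on {0..} (w l)"
    and "\<forall>t. 0 < t \<longrightarrow> t \<notin> E \<longrightarrow> (\<forall>l<n. (w l has_vector_derivative
            (if Suc l < n then w (Suc l) t else y t - (\<Sum>k<n. coeff p k * w k t))) (at t))"
    and "(y \<longlongrightarrow> Y) at_top"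
  shows "\<forall>l<n. (w l \<longlongrightarrow> (if l = 0 then Y / coeff p 0 else 0)) at_top"
  using assms(1-4,6-)
proof (induction n arbitrary: p w y Y)
  case 0 then show ?case by simp
next
  case (Suc n)
  note hyps = Suc.prems
  show ?case
  proof (cases "n = 0")
    case True
    then have n1: "Suc n = 1" by simp
    have pform: "p = [:coeff p 0, 1:]"
      proof (rule poly_eqI)
      fix k show "coeff p k = coeff [:coeff p 0, 1:] k"
        using hyps(1,3) n1 by (cases k) (auto simp: coeff_pCons coeff_eq_0 split: nat.split)
    qed
    have "poly p (- coeff p 0) = 0" by (subst pform) simp
    then have re: "Re (- coeff p 0) < 0" using hyps(4) by blast
    have du: "(w 0 has_vector_derivative (- coeff p 0) * w 0 t + y t) (at t)" if "0 < t" "t \<notin> E" for t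
      using hyps(6)[rule_format, OF that, of 0] n1 by (simp add: algebra_simps)
    have "(w 0 \<longlongrightarrow> - Y / (- coeff p 0)) at_top"
      by (rule scalar_conv[OF re E _ du hyps(7)]) (use hyps(5) n1 in auto)
    then show ?thesis using n1 by auto
  next
    case False
    then have n1: "n \<ge> 1" by simp
    have "\<not> constant (poly p)"
    proof
      assume "constant (poly p)"
      then obtain c where "\<forall>x. poly p x = c" unfolding constant_def by blast
      then have "poly p = poly [:c:]" by auto
      then have "p = [:c:]" by (simp add: poly_eq_poly_eq_iff)
      then show False using hyps(1) by simp
    qed
    then obtain lam where lam: "poly p lam = 0" using fundamental_theorem_of_algebra by blast
    then obtain q where pq: "p = [:- lam, 1:] * q" using poly_eq_0_iff_dvd by (metis dvdE)
    have q0: "q \<noteq> 0" using pq hyps(1) by auto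
    have degq: "degree q = n" using hyps(1) q0 unfolding pq by (subst (asm) degree_mult_eq) auto
    have lcq: "lead_coeff q = 1" using hyps(3) unfolding pq lead_coeff_mult by simp
    have rootq: "\<forall>z. poly q z = 0 \<longrightarrow> Re z < 0" using pq hyps(4) by auto
    have relam: "Re lam < 0" using lam hyps(4) by blast
    have lam0: "lam \<noteq> 0" using relam by auto
    have cq0: "coeff q 0 \<noteq> 0"
    proof
      assume "coeff q 0 = 0"
      then have "poly q 0 = 0" by (simp add: poly_0_coeff_0)
      then show False using rootq by force
    qed
    have cp: "coeff p k = (if k = 0 then 0 else coeff q (k - 1)) - lam * coeff q k" for k
      unfolding pq by (rule coeff_lin_mult)
    define v where "v l t = w (Suc l) t - lam * w l t" for l t
    have vc: "\<forall>l<n. continuous_on {0..} (v l)"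
      using hyps(5) unfolding v_def by (auto intro!: continuous_intros)
    have sumid: "(\<Sum>k<n. coeff q k * v k t) = (\<Sum>k<Suc n. coeff p k * w k t) + lam * w n t" for t
    proof -
      have "(\<Sum>k<Suc n. coeff p k * w k t) =
          (\<Sum>k<Suc n. (if k = 0 then 0 else coeff q (k - 1)) * w k t) - lam * (\<Sum>k<Suc n. coeff q k * w k t)"
        by (simp add: cp algebra_simps sum_subtractf sum_distrib_left)
      also have "(\<Sum>k<Suc n. (if k = 0 then 0 else coeff q (k - 1)) * w k t) = (\<Sum>k<n. coeff q k * w (Suc k) t)"
        by (subst sum.lessThan_Suc_shift) simp
      also have "(\<Sum>k<Suc n. coeff q k * w k t) = (\<Sum>k<n. coeff q k * w k t) + w n t"
        using lcq degq by simp
      finally show ?thesis unfolding v_def by (simp add: algebra_simps sum_subtractf sum_distrib_left)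
    qed
    have vd: "\<forall>t. 0 < t \<longrightarrow> t \<notin> E \<longrightarrow> (\<forall>l<n. (v l has_vector_derivative
            (if Suc l < n then v (Suc l) t else y t - (\<Sum>k<n. coeff q k * v k t))) (at t))"
    proof (intro allI impI)
      fix t l assume t: "0 < t" "t \<notin> E" and l: "l < n"
      have d1: "(w (Suc l) has_vector_derivative
            (if Suc (Suc l) < Suc n then w (Suc (Suc l)) t else y t - (\<Sum>k<Suc n. coeff p k * w k t))) (at t)"
        using hyps(6) t l by auto
      have d2: "(w l has_vector_derivative w (Suc l) t) (at t)"
        using hyps(6)[rule_format, OF t(1,2), of l] l by simp
      have "(v l has_vector_derivative
         (if Suc (Suc l) < Suc n then w (Suc (Suc l)) t else y t - (\<Sum>k<Suc n. coeff p k * w k t)) - lam * w (Suc l) t) (at t)"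
        unfolding v_def[abs_def] by (auto intro!: derivative_eq_intros d1 d2)
      moreover have "(if Suc (Suc l) < Suc n then w (Suc (Suc l)) t else y t - (\<Sum>k<Suc n. coeff p k * w k t)) - lam * w (Suc l) t
          = (if Suc l < n then v (Suc l) t else y t - (\<Sum>k<n. coeff q k * v k t))"
      proof (cases "Suc l < n")
        case True then show ?thesis by (simp add: v_def)
      next
        case False then have "Suc l = n" using l by simp
        then show ?thesis using sumid[of t] by (simp add: algebra_simps)
      qed
      ultimately show "(v l has_vector_derivative
            (if Suc l < n then v (Suc l) t else y t - (\<Sum>k<n. coeff q k * v k t))) (at t)" by simp
    qed
    have IH: "\<forall>l<n. (v l \<longlongrightarrow> (if l = 0 then Y / coeff q 0 else 0)) at_top"
      using Suc.IH[OF degq n1 lcq rootq vc vd hyps(7)] .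
    have du: "(w 0 has_vector_derivative lam * w 0 t + v 0 t) (at t)" if "0 < t" "t \<notin> E" for t
      using hyps(6)[rule_format, OF that, of 0] n1 by (simp add: v_def algebra_simps)
    have w0: "(w 0 \<longlongrightarrow> - (Y / coeff q 0) / lam) at_top"
      by (rule scalar_conv[OF relam E _ du]) (use hyps(5) IH n1 in auto)
    have p0: "coeff p 0 = - lam * coeff q 0" using cp[of 0] by simp
    have w0': "(w 0 \<longlongrightarrow> Y / coeff p 0) at_top"
      using w0 p0 lam0 cq0 by (simp add: field_simps)
    have "(w l \<longlongrightarrow> (if l = 0 then Y / coeff p 0 else 0)) at_top" if "l < Suc n" for l
      using that
    proof (induction l)
      case 0 then show ?case using w0' by simp
    next
      case (Suc l)
      have ev: "w (Suc l) = (\<lambda>t. v l t + lam * w l t)" by (simp add: v_def[abs_def])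
      have "((\<lambda>t. v l t + lam * w l t) \<longlongrightarrow> (if l = 0 then Y / coeff q 0 else 0) + lam * (if l = 0 then Y / coeff p 0 else 0)) at_top"
        using IH Suc by (intro tendsto_intros) auto
      moreover have "(if l = 0 then Y / coeff q 0 else 0) + lam * (if l = 0 then Y / coeff p 0 else 0) = 0"
        using p0 lam0 cq0 by (auto simp: field_simps)
      ultimately show ?case unfolding ev by simp
    qed
    then show ?thesis by blast
  qed
qed

locale sys =
  fixes N m :: nat and a :: "nat \<Rightarrow> real"
    and S :: "'k set" and \<alpha> :: "'k \<Rightarrow> nat \<Rightarrow> nat \<Rightarrow> real"
    and \<sigma> :: "real \<Rightarrow> 'k" and \<tau>D :: real and ts :: "nat \<Rightarrow> real"
    and x :: "nat \<Rightarrow> real \<Rightarrow> nat \<Rightarrow> real"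
  assumes m2: "m \<ge> 2"
    and hurwitz: "\<forall>z. poly (char_poly m a) z = 0 \<longrightarrow> Re z < 0"
    and finS: "finite S"
    and weights_nonneg: "\<forall>k\<in>S. \<forall>i j. \<alpha> k i j \<ge> 0"
    and no_loops: "\<forall>k\<in>S. \<forall>i. \<alpha> k i i = 0"
    and sigma_in: "\<forall>t\<ge>0. \<sigma> t \<in> S"
    and tau: "\<tau>D > 0" and dwell: "dwell_switching \<tau>D \<sigma> ts"
    and conn: "UJQSC N \<alpha> \<sigma>"
    and bal: "\<forall>k\<in>S. balanced N \<alpha> k"
    and cont: "\<forall>i<N. \<forall>l<m. continuous_on {0..} (\<lambda>t. x i t l)"
    and ode: "\<forall>n t. ts n < t \<and> t < ts (Suc n) \<longrightarrow>
               (\<forall>i<N. \<forall>l<m. ((\<lambda>s. x i s l) has_real_derivative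
                   closed_loop N m a \<alpha> (\<sigma> t) (\<lambda>j. x j t) i l) (at t))"
begin

lemma ts0: "ts 0 = 0" and ts_step: "ts (Suc n) - ts n \<ge> \<tau>D"
  and sig_const: "ts n \<le> t \<Longrightarrow> t < ts (Suc n) \<Longrightarrow> \<sigma> t = \<sigma> (ts n)"
  using dwell unfolding dwell_switching_def by auto

lemma ts_ge: "ts n \<ge> real n * \<tau>D"
proof (induction n)
  case 0 then show ?case using ts0 by simp
next
  case (Suc n) then show ?case using ts_step[of n] by (simp add: algebra_simps)
qed

lemma ts_mono: "n \<le> n' \<Longrightarrow> ts n \<le> ts n'"
proof (induction n' rule: dec_induct)
  case base then show ?case by simp
next
  case (step k) then show ?case using ts_step[of k] tau by simp
qed

lemma ts_nonneg: "ts n \<ge> 0" using ts_mono[of 0 n] ts0 by simp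

lemma E_fin: "finite (range ts \<inter> {..b})"
proof -
  have "range ts \<inter> {..b} \<subseteq> ts ` {..nat \<lceil>b / \<tau>D\<rceil>}"
  proof
    fix s assume "s \<in> range ts \<inter> {..b}"
    then obtain n where s: "s = ts n" "ts n \<le> b" by auto
    then have "real n * \<tau>D \<le> b" using ts_ge[of n] by simp
    then have "real n \<le> b / \<tau>D" using tau by (simp add: pos_le_divide_eq)
    then have "n \<le> nat \<lceil>b / \<tau>D\<rceil>" by linarith
    then show "s \<in> ts ` {..nat \<lceil>b / \<tau>D\<rceil>}" using s by auto
  qed
  then show ?thesis by (rule finite_subset) simp
qed

lemma interval_of:
  assumes "t \<ge> 0" shows "\<exists>n. ts n \<le> t \<and> t < ts (Suc n)"
proof -
  define k where "k = nat \<lceil>t / \<tau>D\<rceil> + 1"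
  have "t < ts k"
  proof -
    have "t / \<tau>D < real k" unfolding k_def by linarith
    then have "t < real k * \<tau>D" using tau by (simp add: divide_less_eq)
    then show ?thesis using ts_ge[of k] by linarith
  qed
  then have ex: "\<exists>k. t < ts k" by blast
  define j where "j = (LEAST k. t < ts k)"
  have j: "t < ts j" unfolding j_def by (rule LeastI_ex[OF ex])
  have "j \<noteq> 0"
  proof
    assume "j = 0" with j ts0 assms show False by simp
  qed
  then obtain n where jn: "j = Suc n" by (cases j) auto
  have "\<not> t < ts n" using not_less_Least[of n "\<lambda>k. t < ts k"] jn j_def by simp
  then show ?thesis using j jn by (auto simp: not_less)
qed

lemma sigma_S: "t \<ge> 0 \<Longrightarrow> \<sigma> t \<in> S" using sigma_in by auto

lemma deriv_x:
  assumes "t > 0" "t \<notin> range ts" "i < N" "l < m"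
  shows "((\<lambda>s. x i s l) has_real_derivative closed_loop N m a \<alpha> (\<sigma> t) (\<lambda>j. x j t) i l) (at t)"
proof -
  obtain n where n: "ts n \<le> t" "t < ts (Suc n)" using interval_of[of t] assms(1) by auto
  have "ts n \<noteq> t" using assms(2) by auto
  then have "ts n < t" using n by simp
  then show ?thesis using ode n assms by blast
qed

definition y where "y i t = rowmul m (K2 m a) (x i t)"

lemma sum_nb:
  assumes "k \<in> S"
  shows "(\<Sum>j\<in>{j. j < N \<and> \<alpha> k i j > 0}. \<alpha> k i j * f j) = (\<Sum>j<N. \<alpha> k i j * f j)"
proof -
  have "(\<Sum>j\<in>{j. j < N \<and> \<alpha> k i j > 0}. \<alpha> k i j * f j) = (\<Sum>j\<in>{..<N}. \<alpha> k i j * f j)"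
  proof (rule sum.mono_neutral_left)
    show "\<forall>j\<in>{..<N} - {j. j < N \<and> \<alpha> k i j > 0}. \<alpha> k i j * f j = 0"
      using weights_nonneg assms by (auto simp: not_less intro: antisym)
  qed auto
  then show ?thesis by simp
qed

lemma rowmul_diff: "rowmul m K (\<lambda>l. u l - v l) = rowmul m K u - rowmul m K v"
  by (simp add: rowmul_def algebra_simps sum_subtractf)

lemma K2_closed:
  assumes "k \<in> S"
  shows "rowmul m (K2 m a) (\<lambda>l. closed_loop N m a \<alpha> k X i l)
       = - (\<Sum>j<N. \<alpha> k i j * (rowmul m (K2 m a) (X i) - rowmul m (K2 m a) (X j)))"
proof -
  obtain m' where mm: "m = Suc m'" and m'1: "m' \<ge> 1" using m2 by (cases m) auto
  define u where "u = protocol N m a \<alpha> k X i"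
  have "rowmul m (K2 m a) (\<lambda>l. closed_loop N m a \<alpha> k X i l)
     = (\<Sum>l<m'. a (l + 1) * X i (l + 1)) + u"
    unfolding rowmul_def closed_loop_def mm u_def
    by (simp add: K2_def Amul_def Bmul_def algebra_simps sum.distrib)
  also have "u = - (\<Sum>l<m'. a (l + 1) * X i (l + 1))
       - (\<Sum>j<N. \<alpha> k i j * (rowmul m (K2 m a) (X i) - rowmul m (K2 m a) (X j)))"
  proof -
    have "rowmul m (K1 m a) (X i) = - (\<Sum>l<m'. a (l + 1) * X i (l + 1))"
      unfolding rowmul_def mm by (subst sum.lessThan_Suc_shift) (simp add: K1_def sum_negf)
    then show ?thesis unfolding u_def protocol_def sum_nb[OF assms] rowmul_diff by simp
  qed
  finally show ?thesis by simp
qed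

end

lemma bal_ident1:
  fixes A :: "nat \<Rightarrow> nat \<Rightarrow> real"
  assumes "\<forall>j<N. (\<Sum>l<N. A j l) = (\<Sum>i<N. A i j)"
  shows "(\<Sum>i<N. \<Sum>j<N. A i j * (v i - v j)) = 0"
proof -
  have "(\<Sum>i<N. \<Sum>j<N. A i j * (v i - v j)) = (\<Sum>i<N. (\<Sum>j<N. A i j) * v i) - (\<Sum>i<N. \<Sum>j<N. A i j * v j)"
    by (simp add: algebra_simps sum_subtractf sum_distrib_right sum_distrib_left)
  also have "(\<Sum>i<N. \<Sum>j<N. A i j * v j) = (\<Sum>j<N. (\<Sum>i<N. A i j) * v j)"
    by (subst sum.swap) (simp add: sum_distrib_right)
  also have "\<dots> = (\<Sum>j<N. (\<Sum>l<N. A j l) * v j)" using assms by simp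
  finally show ?thesis by simp
qed

lemma bal_ident2:
  fixes A :: "nat \<Rightarrow> nat \<Rightarrow> real"
  assumes "\<forall>j<N. (\<Sum>l<N. A j l) = (\<Sum>i<N. A i j)"
  shows "(\<Sum>i<N. (v i - c) * (\<Sum>j<N. A i j * (v i - v j))) = (\<Sum>i<N. \<Sum>j<N. A i j * (v i - v j)\<^sup>2) / 2"
proof -
  define P where "P = (\<Sum>i<N. \<Sum>j<N. A i j * (v i * (v i - v j)))"
  define Q where "Q = (\<Sum>i<N. \<Sum>j<N. A i j * (v j * (v i - v j)))"
  have sq: "(\<Sum>i<N. \<Sum>j<N. A i j * (v i - v j)\<^sup>2) = P - Q"
    unfolding P_def Q_def sum_subtractf[symmetric]
    by (intro sum.cong refl) (simp add: power2_eq_square algebra_simps)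
  have "P + Q = (\<Sum>i<N. \<Sum>j<N. A i j * ((v i)\<^sup>2 - (v j)\<^sup>2))"
    unfolding P_def Q_def sum.distrib[symmetric]
    by (intro sum.cong refl) (simp add: power2_eq_square algebra_simps)
  also have "\<dots> = 0" by (rule bal_ident1[OF assms])
  finally have PQ: "Q = - P" by simp
  define X where "X i = (\<Sum>j<N. A i j * (v i - v j))" for i
  have "(\<Sum>i<N. (v i - c) * X i) = (\<Sum>i<N. v i * X i) - c * (\<Sum>i<N. X i)"
    by (simp add: left_diff_distrib sum_subtractf sum_distrib_left)
  also have "(\<Sum>i<N. X i) = 0" unfolding X_def by (rule bal_ident1[OF assms])
  also have "(\<Sum>i<N. v i * X i) = P"
    unfolding P_def X_def by (simp add: sum_distrib_left mult.assoc mult.left_commute)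
  finally have "(\<Sum>i<N. (v i - c) * X i) = P" by simp
  then show ?thesis using sq PQ unfolding X_def by simp
qed

context sys begin

lemma bal_k:
  assumes "k \<in> S" shows "\<forall>j<N. (\<Sum>l<N. \<alpha> k j l) = (\<Sum>i<N. \<alpha> k i j)"
proof (intro allI impI)
  fix j assume j: "j < N"
  have "0 = (\<Sum>i<N. laplacian N \<alpha> k i j)" using bal assms j unfolding balanced_def by auto
  also have "\<dots> = laplacian N \<alpha> k j j + (\<Sum>i\<in>{..<N} - {j}. laplacian N \<alpha> k i j)"
    using j by (subst sum.remove[of _ j]) auto
  also have "(\<Sum>i\<in>{..<N} - {j}. laplacian N \<alpha> k i j) = - (\<Sum>i\<in>{..<N} - {j}. \<alpha> k i j)"
    by (simp add: laplacian_def sum_negf)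
  also have "(\<Sum>i\<in>{..<N} - {j}. \<alpha> k i j) = (\<Sum>i<N. \<alpha> k i j) - \<alpha> k j j"
    using j by (subst sum_diff1) auto
  also have "laplacian N \<alpha> k j j = (\<Sum>l<N. \<alpha> k j l)"
    using sum_nb[OF assms, of j "\<lambda>_. 1"] by (simp add: laplacian_def)
  finally show "(\<Sum>l<N. \<alpha> k j l) = (\<Sum>i<N. \<alpha> k i j)" using no_loops assms by simp
qed

lemma cont_y: "i < N \<Longrightarrow> continuous_on {0..} (y i)"
  unfolding y_def[abs_def] rowmul_def using cont by (auto intro!: continuous_intros)

lemma deriv_y:
  assumes "t > 0" "t \<notin> range ts" "i < N"
  shows "(y i has_real_derivative - (\<Sum>j<N. \<alpha> (\<sigma> t) i j * (y i t - y j t))) (at t)"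
proof -
  have "((\<lambda>s. \<Sum>l<m. K2 m a l * x i s l) has_real_derivative
      (\<Sum>l<m. K2 m a l * closed_loop N m a \<alpha> (\<sigma> t) (\<lambda>j. x j t) i l)) (at t)"
    by (intro DERIV_sum DERIV_cmult deriv_x assms) auto
  moreover have "(\<Sum>l<m. K2 m a l * closed_loop N m a \<alpha> (\<sigma> t) (\<lambda>j. x j t) i l)
      = - (\<Sum>j<N. \<alpha> (\<sigma> t) i j * (y i t - y j t))"
    using K2_closed[OF sigma_S, of t "\<lambda>j. x j t" i] assms(1)
    unfolding rowmul_def y_def by simp
  ultimately show ?thesis unfolding y_def[abs_def] rowmul_def by simp
qed

definition ybar where "ybar = (\<Sum>j<N. y j 0) / N"
definition V where "V t = (\<Sum>i<N. (y i t - ybar)\<^sup>2)"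
definition Q where "Q t = (\<Sum>i<N. \<Sum>j<N. \<alpha> (\<sigma> t) i j * (y i t - y j t)\<^sup>2)"

lemma Q_nonneg: "t \<ge> 0 \<Longrightarrow> Q t \<ge> 0"
  unfolding Q_def using weights_nonneg sigma_S by (auto intro!: sum_nonneg)

lemma V_nonneg: "V t \<ge> 0" unfolding V_def by (auto intro!: sum_nonneg)

lemma cont_V: "continuous_on {0..} V"
  unfolding V_def[abs_def] using cont_y by (auto intro!: continuous_intros)

lemma deriv_ysum:
  assumes "t > 0" "t \<notin> range ts"
  shows "((\<lambda>s. \<Sum>i<N. y i s) has_real_derivative 0) (at t)"
proof -
  have "((\<lambda>s. \<Sum>i<N. y i s) has_real_derivative (\<Sum>i<N. - (\<Sum>j<N. \<alpha> (\<sigma> t) i j * (y i t - y j t)))) (at t)"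
    by (intro DERIV_sum deriv_y assms) auto
  moreover have "(\<Sum>i<N. - (\<Sum>j<N. \<alpha> (\<sigma> t) i j * (y i t - y j t))) = 0"
    using bal_ident1[OF bal_k[OF sigma_S], of t "\<lambda>i. y i t"] assms by (simp add: sum_negf)
  ultimately show ?thesis by simp
qed

lemma ysum_const:
  assumes "t \<ge> 0" shows "(\<Sum>i<N. y i t) = (\<Sum>i<N. y i 0)"
proof -
  have "\<forall>i<N. continuous_on {0..t} (y i)"
    using cont_y by (meson atLeastAtMost_iff atLeast_iff continuous_on_subset subsetI)
  then have c: "continuous_on {0..t} (\<lambda>s. \<Sum>i<N. y i s)"
    by (auto intro!: continuous_intros)
  have "(\<Sum>i<N. y i t) \<le> (\<Sum>i<N. y i 0)"
    by (rule mon[OF assms E_fin[of t] c, where g' = "\<lambda>_. 0"]) (use deriv_ysum in auto)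
  moreover have "- (\<Sum>i<N. y i t) \<le> - (\<Sum>i<N. y i 0)"
  proof (rule mon[OF assms E_fin[of t], of "\<lambda>s. - (\<Sum>i<N. y i s)" "\<lambda>_. 0"])
    show "continuous_on {0..t} (\<lambda>s. - (\<Sum>i<N. y i s))" using continuous_on_minus[OF c] .
    fix s assume "s \<in> {0<..<t} - range ts \<inter> {..t}"
    then show "((\<lambda>s. - (\<Sum>i<N. y i s)) has_real_derivative 0) (at s) \<and> (0::real) \<le> 0"
      using DERIV_minus[OF deriv_ysum[of s]] by auto
  qed
  ultimately show ?thesis by simp
qed

lemma deriv_V:
  assumes "t > 0" "t \<notin> range ts"
  shows "(V has_real_derivative - Q t) (at t)"
proof -
  have "(V has_real_derivative (\<Sum>i<N. 2 * (y i t - ybar) * (- (\<Sum>j<N. \<alpha> (\<sigma> t) i j * (y i t - y j t))))) (at t)"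
    unfolding V_def[abs_def] by (intro DERIV_sum) (auto intro!: derivative_eq_intros deriv_y assms)
  moreover have "(\<Sum>i<N. 2 * (y i t - ybar) * (- (\<Sum>j<N. \<alpha> (\<sigma> t) i j * (y i t - y j t)))) = - Q t"
  proof -
    define X where "X i = (\<Sum>j<N. \<alpha> (\<sigma> t) i j * (y i t - y j t))" for i
    have "(\<Sum>i<N. (y i t - ybar) * X i) = Q t / 2"
      using bal_ident2[OF bal_k[OF sigma_S], of t "\<lambda>i. y i t" ybar] assms unfolding Q_def X_def by simp
    moreover have "(\<Sum>i<N. 2 * (y i t - ybar) * (- X i)) = - 2 * (\<Sum>i<N. (y i t - ybar) * X i)"
      apply (simp add: sum_distrib_left sum_negf mult.assoc)
      by (intro sum.cong refl) (simp add: algebra_simps)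
    ultimately have "(\<Sum>i<N. 2 * (y i t - ybar) * (- X i)) = - Q t" by simp
    then show ?thesis unfolding X_def .
  qed
  ultimately show ?thesis by simp
qed

lemma V_mono:
  assumes "0 \<le> s" "s \<le> t" shows "V t \<le> V s"
proof (rule mon[OF assms(2) E_fin[of t], where g = V and g' = "\<lambda>u. - Q u"])
  show "continuous_on {s..t} V" using cont_V assms by (auto intro: continuous_on_subset)
  fix u assume "u \<in> {s<..<t} - range ts \<inter> {..t}"
  then show "(V has_real_derivative - Q u) (at u) \<and> - Q u \<le> 0"
    using deriv_V Q_nonneg assms by auto
qed

end

lemma relpow_close:
  fixes v :: "nat \<Rightarrow> real"
  assumes "\<forall>(j,i)\<in>R. \<bar>v i - v j\<bar> < e" "e \<ge> 0"
  shows "(r, w) \<in> R ^^ n \<Longrightarrow> \<bar>v w - v r\<bar> \<le> real n * e"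
proof (induction n arbitrary: w)
  case 0 then show ?case by simp
next
  case (Suc n)
  then obtain z where z: "(r, z) \<in> R ^^ n" "(z, w) \<in> R" by auto
  have "\<bar>v z - v r\<bar> \<le> real n * e" using Suc.IH z(1) .
  moreover have "\<bar>v w - v z\<bar> < e" using assms(1) z(2) by auto
  ultimately show ?case by (simp add: algebra_simps)
qed

lemma path_close:
  fixes v :: "nat \<Rightarrow> real"
  assumes "R \<subseteq> {..<N} \<times> {..<N}" "\<forall>(j,i)\<in>R. \<bar>v i - v j\<bar> < e" "e \<ge> 0" "(r, w) \<in> R\<^sup>*"
  shows "\<bar>v w - v r\<bar> \<le> real N ^ 2 * e"
proof -
  have fin: "finite R" using assms(1) by (rule finite_subset) auto
  have cR: "card R \<le> N * N"
    using card_mono[OF _ assms(1)] by (simp add: card_cartesian_product)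
  obtain n where n: "n \<le> card R" "(r, w) \<in> R ^^ n"
    using assms(4) rtrancl_finite_eq_relpow[OF fin] by auto
  have "\<bar>v w - v r\<bar> \<le> real n * e" by (rule relpow_close[OF assms(2,3) n(2)])
  also have "\<dots> \<le> real N ^ 2 * e"
    using n(1) cR assms(3) by (intro mult_right_mono) (auto simp: power2_eq_square simp flip: of_nat_mult)
  finally show ?thesis .
qed

lemma amgm_aux:
  fixes A d amax \<beta> c :: real
  assumes A0: "A \<ge> 0" "A \<le> amax" and c: "c = \<beta> / real N" and b: "\<beta> > 0" and N: "N > 0"
  shows "\<bar>A * d\<bar> \<le> c / 2 + (real N * amax / 2 / \<beta>) * (A * d\<^sup>2)"
proof -
  define z where "z = A * \<bar>d\<bar>"
  have cpos: "c > 0" using c b N by simp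
  have "0 \<le> (z - c)\<^sup>2 / (2 * c)" using cpos by simp
  also have "(z - c)\<^sup>2 / (2 * c) = c / 2 + z\<^sup>2 / (2 * c) - z"
    using cpos by (simp add: power2_eq_square field_simps)
  finally have 1: "z \<le> c / 2 + z\<^sup>2 / (2 * c)" by simp
  have "z\<^sup>2 = A * (A * d\<^sup>2)" unfolding z_def by (simp add: power_mult_distrib power2_eq_square)
  also have "\<dots> \<le> amax * (A * d\<^sup>2)" using A0 by (intro mult_right_mono) auto
  finally have 2: "z\<^sup>2 / (2 * c) \<le> amax * (A * d\<^sup>2) / (2 * c)" using cpos by (simp add: divide_right_mono)
  have 3: "amax * (A * d\<^sup>2) / (2 * c) = (real N * amax / 2 / \<beta>) * (A * d\<^sup>2)"
    unfolding c using b N by (simp add: field_simps)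
  have "\<bar>A * d\<bar> = z" unfolding z_def using A0 by (simp add: abs_mult)
  then show ?thesis using 1 2 3 by linarith
qed

context sys begin

lemma weight_bounds:
  "\<exists>amin amax. amin > 0 \<and> amax > 0 \<and>
     (\<forall>k\<in>S. \<forall>i<N. \<forall>j<N. \<alpha> k i j \<le> amax \<and> (\<alpha> k i j > 0 \<longrightarrow> amin \<le> \<alpha> k i j))"
proof -
  define W where "W = (\<lambda>(k, i, j). \<alpha> k i j) ` (S \<times> {..<N} \<times> {..<N})"
  have finW: "finite W" unfolding W_def using finS by auto
  define amax where "amax = Max (insert 1 W)"
  define amin where "amin = Min (insert 1 {w\<in>W. w > 0})"
  have "amax \<ge> 1" unfolding amax_def using finW by auto
  moreover have "amin > 0" unfolding amin_def using finW by (subst Min_gr_iff) auto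
  moreover have "\<alpha> k i j \<le> amax \<and> (\<alpha> k i j > 0 \<longrightarrow> amin \<le> \<alpha> k i j)"
    if "k \<in> S" "i < N" "j < N" for k i j
  proof -
    have w: "\<alpha> k i j \<in> W" unfolding W_def using that by force
    have "\<alpha> k i j \<le> amax" unfolding amax_def using finW w by (intro Max_ge) auto
    moreover have "\<alpha> k i j > 0 \<longrightarrow> amin \<le> \<alpha> k i j" unfolding amin_def using finW w by (auto intro!: Min_le)
    ultimately show ?thesis by blast
  qed
  ultimately show ?thesis by (intro exI[of _ amin] exI[of _ amax]) (meson less_le_trans zero_less_one)
qed

lemma not_in_range:
  assumes "ts n < s" "s < ts (Suc n)" shows "s \<notin> range ts"
proof
  assume "s \<in> range ts" then obtain k where k: "s = ts k" by auto
  show False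
  proof (cases "k \<le> n")
    case True then show False using ts_mono[of k n] k assms by simp
  next
    case False then show False using ts_mono[of "Suc n" k] k assms by simp
  qed
qed

lemma term_le_Q:
  assumes "t \<ge> 0" "i < N" "j < N"
  shows "\<alpha> (\<sigma> t) i j * (y i t - y j t)\<^sup>2 \<le> Q t"
proof -
  have nn: "\<And>i j. 0 \<le> \<alpha> (\<sigma> t) i j * (y i t - y j t)\<^sup>2" using weights_nonneg sigma_S[OF assms(1)] by simp
  have "\<alpha> (\<sigma> t) i j * (y i t - y j t)\<^sup>2 \<le> (\<Sum>j<N. \<alpha> (\<sigma> t) i j * (y i t - y j t)\<^sup>2)"
    by (rule member_le_sum[where f = "\<lambda>j. \<alpha> (\<sigma> t) i j * (y i t - y j t)\<^sup>2" and i = j]) (simp_all add: assms nn)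
  also have "\<dots> \<le> Q t" unfolding Q_def
    by (rule member_le_sum[where f = "\<lambda>i. \<Sum>j<N. \<alpha> (\<sigma> t) i j * (y i t - y j t)\<^sup>2" and i = i])
       (simp_all add: assms sum_nonneg[OF nn])
  finally show ?thesis .
qed

lemma row_le_Q:
  assumes "t \<ge> 0" "i < N"
  shows "(\<Sum>j<N. \<alpha> (\<sigma> t) i j * (y i t - y j t)\<^sup>2) \<le> Q t"
proof -
  have nn: "\<And>i j. 0 \<le> \<alpha> (\<sigma> t) i j * (y i t - y j t)\<^sup>2" using weights_nonneg sigma_S[OF assms(1)] by simp
  show ?thesis unfolding Q_def
    by (rule member_le_sum[where f = "\<lambda>i. \<Sum>j<N. \<alpha> (\<sigma> t) i j * (y i t - y j t)\<^sup>2" and i = i])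
       (simp_all add: assms sum_nonneg[OF nn])
qed

lemma deriv_y_bound:
  assumes "t > 0" "i < N" "\<beta> > 0" "\<forall>k\<in>S. \<forall>i<N. \<forall>j<N. \<alpha> k i j \<le> amax" "N > 0"
  shows "\<bar>\<Sum>j<N. \<alpha> (\<sigma> t) i j * (y i t - y j t)\<bar> \<le> \<beta> / 2 + (real N * amax / 2 / \<beta>) * Q t"
proof -
  define c where "c = \<beta> / real N"
  have c: "c > 0" using assms by (simp add: c_def)
  have k: "\<sigma> t \<in> S" using sigma_S assms(1) by simp
  have "\<alpha> (\<sigma> t) i i \<le> amax" using assms(4) k assms(2) by blast
  moreover have "0 \<le> \<alpha> (\<sigma> t) i i" using weights_nonneg k by blast
  ultimately have amax0: "0 \<le> amax" by linarith
  have trm: "\<bar>\<alpha> (\<sigma> t) i j * (y i t - y j t)\<bar> \<le> c / 2 + (real N * amax / 2 / \<beta>) * (\<alpha> (\<sigma> t) i j * (y i t - y j t)\<^sup>2)"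
    if j: "j < N" for j
  proof -
    define A where "A = \<alpha> (\<sigma> t) i j"
    define d where "d = y i t - y j t"
    have A0: "A \<ge> 0" "A \<le> amax" using weights_nonneg k assms(4) assms(2) j by (auto simp: A_def)
    have "\<bar>A * d\<bar> \<le> c / 2 + (real N * amax / 2 / \<beta>) * (A * d\<^sup>2)"
      by (rule amgm_aux[OF A0 _ assms(3,5)]) (simp add: c_def)
    then show ?thesis by (simp add: A_def d_def)
  qed
  have "\<bar>\<Sum>j<N. \<alpha> (\<sigma> t) i j * (y i t - y j t)\<bar> \<le> (\<Sum>j<N. \<bar>\<alpha> (\<sigma> t) i j * (y i t - y j t)\<bar>)"
    by (rule sum_abs)
  also have "\<dots> \<le> (\<Sum>j<N. c / 2 + (real N * amax / 2 / \<beta>) * (\<alpha> (\<sigma> t) i j * (y i t - y j t)\<^sup>2))"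
    by (rule sum_mono) (rule trm, simp)
  also have "\<dots> = \<beta> / 2 + (real N * amax / 2 / \<beta>) * (\<Sum>j<N. \<alpha> (\<sigma> t) i j * (y i t - y j t)\<^sup>2)"
  proof -
    have "(\<Sum>j<N. c / 2) = \<beta> / 2" using assms(5) by (simp add: c_def)
    then show ?thesis by (simp only: sum.distrib sum_distrib_left)
  qed
  also have "\<dots> \<le> \<beta> / 2 + (real N * amax / 2 / \<beta>) * Q t"
  proof -
    have "0 \<le> real N * amax / 2 / \<beta>" using amax0 assms(3) by simp
    then show ?thesis using row_le_Q[of t i] assms(1,2) by (intro add_left_mono mult_left_mono) auto
  qed
  finally show ?thesis .
qed

lemma variation_ord:
  assumes "0 \<le> t1" "t1 \<le> t2" "i < N" "\<beta> > 0" "\<forall>k\<in>S. \<forall>i<N. \<forall>j<N. \<alpha> k i j \<le> amax" "N > 0"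
  shows "\<bar>y i t2 - y i t1\<bar> \<le> \<beta> / 2 * (t2 - t1) + (real N * amax / 2 / \<beta>) * (V t1 - V t2)"
proof -
  define K where "K = real N * amax / 2 / \<beta>"
  have cyi: "continuous_on {t1..t2} (y i)"
    by (rule continuous_on_subset[OF cont_y[OF assms(3)]]) (use assms(1) in auto)
  have cV: "continuous_on {t1..t2} V"
    by (rule continuous_on_subset[OF cont_V]) (use assms(1) in auto)
  have gen: "sg * y i t2 - \<beta> / 2 * t2 + K * V t2 \<le> sg * y i t1 - \<beta> / 2 * t1 + K * V t1"
    if sg: "sg = 1 \<or> sg = -1" for sg :: real
  proof (rule mon[OF assms(2) E_fin[of t2], where g = "\<lambda>s. sg * y i s - \<beta> / 2 * s + K * V s"
        and g' = "\<lambda>s. sg * (- (\<Sum>j<N. \<alpha> (\<sigma> s) i j * (y i s - y j s))) - \<beta> / 2 + K * (- Q s)"])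
    show "continuous_on {t1..t2} (\<lambda>s. sg * y i s - \<beta> / 2 * s + K * V s)"
      by (intro continuous_intros cyi cV)
    fix s assume s: "s \<in> {t1<..<t2} - range ts \<inter> {..t2}"
    then have s0: "s > 0" "s \<notin> range ts" using assms(1) by auto
    have "((\<lambda>s. sg * y i s - \<beta> / 2 * s + K * V s) has_real_derivative
        sg * (- (\<Sum>j<N. \<alpha> (\<sigma> s) i j * (y i s - y j s))) - \<beta> / 2 * 1 + K * (- Q s)) (at s)"
      by (intro DERIV_add DERIV_diff DERIV_cmult deriv_y deriv_V s0 assms(3) DERIV_ident)
    moreover have "sg * (- (\<Sum>j<N. \<alpha> (\<sigma> s) i j * (y i s - y j s))) - \<beta> / 2 + K * (- Q s) \<le> 0"
    proof -
      have "sg * (- (\<Sum>j<N. \<alpha> (\<sigma> s) i j * (y i s - y j s))) \<le> \<bar>\<Sum>j<N. \<alpha> (\<sigma> s) i j * (y i s - y j s)\<bar>"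
        using sg by auto
      also have "\<dots> \<le> \<beta> / 2 + K * Q s" unfolding K_def by (rule deriv_y_bound[OF s0(1) assms(3,4,5,6)])
      finally show ?thesis by simp
    qed
    ultimately show "((\<lambda>s. sg * y i s - \<beta> / 2 * s + K * V s) has_real_derivative
        sg * (- (\<Sum>j<N. \<alpha> (\<sigma> s) i j * (y i s - y j s))) - \<beta> / 2 + K * (- Q s)) (at s) \<and>
        sg * (- (\<Sum>j<N. \<alpha> (\<sigma> s) i j * (y i s - y j s))) - \<beta> / 2 + K * (- Q s) \<le> 0" by simp
  qed
  have "y i t2 - y i t1 \<le> \<beta> / 2 * (t2 - t1) + K * (V t1 - V t2)" using gen[of 1] by (simp add: algebra_simps diff_divide_distrib)
  moreover have "y i t1 - y i t2 \<le> \<beta> / 2 * (t2 - t1) + K * (V t1 - V t2)" using gen[of "-1"] by (simp add: algebra_simps diff_divide_distrib)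
  ultimately show ?thesis unfolding K_def by linarith
qed

lemma variation:
  assumes "0 \<le> t1" "0 \<le> t2" "i < N" "\<beta> > 0" "\<forall>k\<in>S. \<forall>i<N. \<forall>j<N. \<alpha> k i j \<le> amax" "N > 0"
  shows "\<bar>y i t2 - y i t1\<bar> \<le> \<beta> / 2 * \<bar>t2 - t1\<bar> + (real N * amax / 2 / \<beta>) * \<bar>V t1 - V t2\<bar>"
proof (cases "t1 \<le> t2")
  case True
  then show ?thesis using variation_ord[OF assms(1) True assms(3-6)] V_mono[OF assms(1) True] by simp
next
  case False
  then have t21: "t2 \<le> t1" by simp
  have "\<bar>t2 - t1\<bar> = t1 - t2" "\<bar>V t1 - V t2\<bar> = V t2 - V t1"
    using t21 V_mono[OF assms(2) t21] by auto
  then show ?thesis using variation_ord[OF assms(2) t21 assms(3-6)]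
    by (simp only: abs_minus_commute[of "y i t2"])
qed

lemma drop:
  assumes "ts n \<le> p" "p + \<tau>D \<le> ts (Suc n)" "i < N" "j < N"
    and "\<alpha> (\<sigma> (ts n)) i j \<ge> am" "c \<ge> 0"
    and "\<forall>q\<in>{p..p+\<tau>D}. \<bar>y i q - y j q\<bar> \<ge> c"
  shows "V (p + \<tau>D) \<le> V p - am * c\<^sup>2 * \<tau>D"
proof -
  have p0: "p \<ge> 0" using ts_nonneg[of n] assms(1) by simp
  have "V (p + \<tau>D) + am * c\<^sup>2 * (p + \<tau>D) \<le> V p + am * c\<^sup>2 * p"
  proof (rule mon[where F = "{}" and g = "\<lambda>s. V s + am * c\<^sup>2 * s" and g' = "\<lambda>s. - Q s + am * c\<^sup>2"])
    show "p \<le> p + \<tau>D" using tau by simp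
    show "continuous_on {p..p + \<tau>D} (\<lambda>s. V s + am * c\<^sup>2 * s)"
      using continuous_on_subset[OF cont_V, of "{p..p + \<tau>D}"] p0 by (intro continuous_intros) auto
    fix s assume s: "s \<in> {p<..<p + \<tau>D} - {}"
    have sn: "ts n < s" "s < ts (Suc n)" using s assms(1,2) by auto
    have s0: "s > 0" "s \<notin> range ts" using sn ts_nonneg[of n] not_in_range by auto
    have sig: "\<sigma> s = \<sigma> (ts n)" using sig_const sn by simp
    have "((\<lambda>s. V s + am * c\<^sup>2 * s) has_real_derivative - Q s + am * c\<^sup>2 * 1) (at s)"
      by (intro DERIV_add DERIV_cmult deriv_V s0 DERIV_ident)
    moreover have "am * c\<^sup>2 \<le> Q s"
    proof -
      have "c \<le> \<bar>y i s - y j s\<bar>" using assms(7) s by auto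
      then have "c\<^sup>2 \<le> \<bar>y i s - y j s\<bar>\<^sup>2" using assms(6) by (rule power_mono)
      then have cd: "c\<^sup>2 \<le> (y i s - y j s)\<^sup>2" by simp
      have a0: "0 \<le> \<alpha> (\<sigma> s) i j" using weights_nonneg sigma_S[of s] s0 by simp
      have "am * c\<^sup>2 \<le> \<alpha> (\<sigma> s) i j * c\<^sup>2" using assms(5) sig by (intro mult_right_mono) auto
      also have "\<dots> \<le> \<alpha> (\<sigma> s) i j * (y i s - y j s)\<^sup>2" using cd a0 by (rule mult_left_mono)
      finally have "am * c\<^sup>2 \<le> \<alpha> (\<sigma> s) i j * (y i s - y j s)\<^sup>2" .
      also have "\<dots> \<le> Q s" using term_le_Q[of s i j] s0 assms by simp
      finally show ?thesis .
    qed
    ultimately show "((\<lambda>s. V s + am * c\<^sup>2 * s) has_real_derivative - Q s + am * c\<^sup>2) (at s) \<and> - Q s + am * c\<^sup>2 \<le> 0"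
      by simp
  qed auto
  then show ?thesis by (simp add: algebra_simps)
qed

end

context sys begin

lemma V_small:
  assumes N: "N > 0" and eps: "\<epsilon> > 0"
  shows "\<exists>t\<ge>0. V t \<le> \<epsilon>"
proof -
  obtain T where T: "T > 0" and hT: "\<forall>t\<ge>0. \<exists>r<N. \<forall>v<N. (r, v) \<in> (union_edges N \<alpha> \<sigma> t T)\<^sup>*"
    using conn unfolding UJQSC_def by blast
  obtain amin amax where am: "amin > 0" "amax > 0"
    and wb: "\<forall>k\<in>S. \<forall>i<N. \<forall>j<N. \<alpha> k i j \<le> amax \<and> (\<alpha> k i j > 0 \<longrightarrow> amin \<le> \<alpha> k i j)"
    using weight_bounds by blast
  have wmax: "\<forall>k\<in>S. \<forall>i<N. \<forall>j<N. \<alpha> k i j \<le> amax" using wb by blast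
  define W where "W = T + 2 * \<tau>D"
  define M where "M = real N * (2 * real N ^ 2)\<^sup>2"
  have Mp: "M > 0" using N by (simp add: M_def)
  define e where "e = min 1 (\<epsilon> / M)"
  define c where "c = e / 3"
  define \<beta> where "\<beta> = e / (3 * W)"
  define KB where "KB = real N * amax / 2 / \<beta>"
  define \<Delta>0 where "\<Delta>0 = min (amin * c\<^sup>2 * \<tau>D) (e / (6 * KB))"
  have Wp: "W > 0" using T tau by (simp add: W_def)
  have ep: "e > 0" using eps Mp by (simp add: e_def)
  have cp: "c > 0" using ep by (simp add: c_def)
  have bp: "\<beta> > 0" using ep Wp by (simp add: \<beta>_def)
  have KBp: "KB > 0" using N am bp by (simp add: KB_def)
  have D0p: "\<Delta>0 > 0" using am cp tau ep KBp by (simp add: \<Delta>0_def)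
  have "\<exists>t\<ge>\<tau>D. V (t - \<tau>D) - V (t + T + \<tau>D) < \<Delta>0"
  proof (rule ccontr)
    assume "\<not> ?thesis"
    then have big: "\<And>t. t \<ge> \<tau>D \<Longrightarrow> V (t - \<tau>D) - V (t + T + \<tau>D) \<ge> \<Delta>0" by (simp add: not_less)
    have ind: "V (real k * W) \<le> V 0 - real k * \<Delta>0" for k :: nat
    proof (induction k)
      case 0 then show ?case by simp
    next
      case (Suc k)
      have "\<tau>D + real k * W \<ge> \<tau>D" using Wp by simp
      from big[OF this] have "V (real k * W) - V (real (Suc k) * W) \<ge> \<Delta>0"
        by (simp add: W_def algebra_simps)
      then show ?case using Suc.IH by (simp add: algebra_simps)
    qed
    obtain k :: nat where k: "V 0 / \<Delta>0 < real k" using reals_Archimedean2 by blast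
    then have "V 0 < real k * \<Delta>0" using D0p by (simp add: divide_less_eq)
    then have "V (real k * W) < 0" using ind[of k] by simp
    then show False using V_nonneg[of "real k * W"] by simp
  qed
  then obtain t where t: "t \<ge> \<tau>D" and tD: "V (t - \<tau>D) - V (t + T + \<tau>D) < \<Delta>0" by blast
  define \<Delta> where "\<Delta> = V (t - \<tau>D) - V (t + T + \<tau>D)"
  have t0: "t \<ge> 0" "t - \<tau>D \<ge> 0" using t tau by auto
  have Vwin: "V (t + T + \<tau>D) \<le> V q \<and> V q \<le> V (t - \<tau>D)" if "t - \<tau>D \<le> q" "q \<le> t + T + \<tau>D" for q
    using V_mono[of "t - \<tau>D" q] V_mono[of q "t + T + \<tau>D"] that t0 by auto
  have edge: "\<bar>y i t - y j t\<bar> < e" if ji: "(j, i) \<in> union_edges N \<alpha> \<sigma> t T" for i j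
  proof -
    obtain s where ij: "i < N" "j < N" and s: "t \<le> s" "s < t + T" and apos: "\<alpha> (\<sigma> s) i j > 0"
      using ji unfolding union_edges_def by auto
    have s0: "s \<ge> 0" using s t0 by simp
    obtain n where n: "ts n \<le> s" "s < ts (Suc n)" using interval_of[OF s0] by blast
    have sig: "\<sigma> s = \<sigma> (ts n)" using sig_const n by simp
    define p where "p = max (ts n) (s - \<tau>D)"
    have p1: "ts n \<le> p" by (simp add: p_def)
    have p2: "p + \<tau>D \<le> ts (Suc n)"
      using ts_step[of n] n by (auto simp: p_def max_def)
    have p3: "t - \<tau>D \<le> p" "p \<le> s" using s n tau by (auto simp: p_def)
    have amin_le: "amin \<le> \<alpha> (\<sigma> (ts n)) i j"
      using wb sigma_S[OF ts_nonneg[of n]] apos sig ij by auto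
    show ?thesis
    proof (cases "\<forall>q\<in>{p..p+\<tau>D}. \<bar>y i q - y j q\<bar> \<ge> c")
      case True
      have "V (p + \<tau>D) \<le> V p - amin * c\<^sup>2 * \<tau>D"
        by (rule drop[OF p1 p2 ij amin_le]) (use cp True in auto)
      moreover have "V p \<le> V (t - \<tau>D)" "V (t + T + \<tau>D) \<le> V (p + \<tau>D)"
        using Vwin[of p] Vwin[of "p + \<tau>D"] p3 s tau by auto
      ultimately have "amin * c\<^sup>2 * \<tau>D \<le> \<Delta>" unfolding \<Delta>_def by simp
      moreover have "\<Delta>0 \<le> amin * c\<^sup>2 * \<tau>D" by (simp add: \<Delta>0_def)
      ultimately show ?thesis using tD unfolding \<Delta>_def by simp
    next
      case False
      then obtain q where q: "p \<le> q" "q \<le> p + \<tau>D" and qc: "\<bar>y i q - y j q\<bar> < c" by (auto simp: not_le)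
      have qw: "t - \<tau>D \<le> q" "q \<le> t + T + \<tau>D" using q p3 s by auto
      have q0: "q \<ge> 0" using qw t0 by simp
      have tq: "\<bar>t - q\<bar> \<le> W" using qw tau T by (simp add: W_def abs_le_iff)
      have Vq: "\<bar>V q - V t\<bar> \<le> \<Delta>"
        using Vwin[OF qw] Vwin[of t] T tau unfolding \<Delta>_def by (simp add: abs_le_iff)
      have var: "\<bar>y k t - y k q\<bar> \<le> \<beta> / 2 * W + KB * \<Delta>" if "k < N" for k
      proof -
        have "\<bar>y k t - y k q\<bar> \<le> \<beta> / 2 * \<bar>t - q\<bar> + KB * \<bar>V q - V t\<bar>"
          unfolding KB_def by (rule variation[OF q0 t0(1) that bp wmax N])
        also have "\<dots> \<le> \<beta> / 2 * W + KB * \<Delta>"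
          using tq Vq bp KBp by (intro add_mono mult_left_mono) auto
        finally show ?thesis .
      qed
      have "\<bar>y i t - y j t\<bar> \<le> \<bar>y i q - y j q\<bar> + \<bar>y i t - y i q\<bar> + \<bar>y j t - y j q\<bar>" by linarith
      also have "\<dots> < c + 2 * (\<beta> / 2 * W + KB * \<Delta>)"
      proof -
        define A where "A = \<beta> / 2 * W + KB * \<Delta>"
        have "\<bar>y i t - y i q\<bar> \<le> A" "\<bar>y j t - y j q\<bar> \<le> A" using var[OF ij(1)] var[OF ij(2)] by (simp_all add: A_def)
        then show ?thesis using qc unfolding A_def[symmetric] by linarith
      qed
      also have "\<dots> \<le> e"
      proof -
        have "\<Delta> < e / (6 * KB)" using tD unfolding \<Delta>_def \<Delta>0_def by simp
        then have "KB * \<Delta> < KB * (e / (6 * KB))" using KBp by (rule mult_strict_left_mono)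
        also have "\<dots> = e / 6" using KBp by simp
        finally have "KB * \<Delta> < e / 6" .
        moreover have "\<beta> * W = e / 3" using Wp by (simp add: \<beta>_def)
        ultimately show ?thesis unfolding c_def by (simp add: algebra_simps)
      qed
      finally show ?thesis .
    qed
  qed
  \<comment> \<open>Step 3: connectivity gives overall closeness\<close>
  obtain r where r: "r < N" and reach: "\<forall>v<N. (r, v) \<in> (union_edges N \<alpha> \<sigma> t T)\<^sup>*"
    using hT t0 by blast
  have Rsub: "union_edges N \<alpha> \<sigma> t T \<subseteq> {..<N} \<times> {..<N}" unfolding union_edges_def by auto
  have close_r: "\<bar>y v t - y r t\<bar> \<le> real N ^ 2 * e" if "v < N" for v
    by (rule path_close[OF Rsub _ _ reach[rule_format, OF that], where v = "\<lambda>i. y i t"])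
       (use edge ep in auto)
  have close: "\<bar>y i t - y j t\<bar> \<le> 2 * real N ^ 2 * e" if "i < N" "j < N" for i j
    using close_r[OF that(1)] close_r[OF that(2)] by linarith
  have ybar_t: "ybar = (\<Sum>j<N. y j t) / real N" using ysum_const[OF t0(1)] by (simp add: ybar_def)
  have dev: "\<bar>y i t - ybar\<bar> \<le> 2 * real N ^ 2 * e" if i: "i < N" for i
  proof -
    have "y i t - ybar = (\<Sum>j<N. y i t - y j t) / real N"
      using N unfolding ybar_t by (simp add: sum_subtractf field_simps)
    then have "\<bar>y i t - ybar\<bar> = \<bar>\<Sum>j<N. y i t - y j t\<bar> / real N" by simp
    also have "\<dots> \<le> (\<Sum>j<N. \<bar>y i t - y j t\<bar>) / real N"
      using N by (intro divide_right_mono sum_abs) auto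
    also have "\<dots> \<le> (\<Sum>j<N. 2 * real N ^ 2 * e) / real N"
      using N close[OF i] by (intro divide_right_mono sum_mono) auto
    also have "\<dots> = 2 * real N ^ 2 * e" using N by simp
    finally show ?thesis .
  qed
  have "V t \<le> (\<Sum>i<N. (2 * real N ^ 2 * e)\<^sup>2)"
    unfolding V_def
  proof (rule sum_mono)
    fix i assume "i \<in> {..<N}"
    then have "\<bar>y i t - ybar\<bar> \<le> 2 * real N ^ 2 * e" using dev by simp
    then have "\<bar>y i t - ybar\<bar>\<^sup>2 \<le> (2 * real N ^ 2 * e)\<^sup>2" by (rule power_mono) simp
    then show "(y i t - ybar)\<^sup>2 \<le> (2 * real N ^ 2 * e)\<^sup>2" by simp
  qed
  also have "\<dots> = M * (e * e)" by (simp add: M_def power_mult_distrib power2_eq_square)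
  also have "\<dots> \<le> M * e"
  proof -
    have "e \<le> 1" by (simp add: e_def)
    then have "e * e \<le> e * 1" using ep by (intro mult_left_mono) auto
    then show ?thesis using Mp by (intro mult_left_mono) auto
  qed
  also have "\<dots> \<le> \<epsilon>"
  proof -
    have "e \<le> \<epsilon> / M" by (simp add: e_def)
    then show ?thesis using Mp by (simp add: pos_le_divide_eq mult.commute)
  qed
  finally show ?thesis using t0 by blast
qed

lemma y_conv:
  assumes N: "N > 0" and i: "i < N"
  shows "(y i \<longlongrightarrow> ybar) at_top"
  unfolding tendsto_iff
proof (intro allI impI)
  fix \<epsilon> :: real assume eps: "\<epsilon> > 0"
  have e2: "\<epsilon>\<^sup>2 / 2 > 0" using eps by simp
  obtain t0 where t0: "t0 \<ge> 0" "V t0 \<le> \<epsilon>\<^sup>2 / 2" using V_small[OF N e2] by blast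
  show "\<forall>\<^sub>F t in at_top. dist (y i t) ybar < \<epsilon>"
    unfolding eventually_at_top_linorder
  proof (rule exI[of _ t0], intro allI impI)
    fix t assume tt: "t \<ge> t0"
    have "(y i t - ybar)\<^sup>2 \<le> V t" unfolding V_def
      by (rule member_le_sum[where f = "\<lambda>i. (y i t - ybar)\<^sup>2" and i = i]) (simp_all add: i)
    also have "\<dots> \<le> V t0" by (rule V_mono[OF t0(1) tt])
    also have "\<dots> < \<epsilon>\<^sup>2"
    proof -
      have "\<epsilon>\<^sup>2 > 0" using eps by simp
      then show ?thesis using t0(2) by linarith
    qed
    finally have "\<bar>y i t - ybar\<bar>\<^sup>2 < \<epsilon>\<^sup>2" by simp
    then have "\<bar>y i t - ybar\<bar> < \<epsilon>" by (rule power_less_imp_less_base) (use eps in simp)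
    then show "dist (y i t) ybar < \<epsilon>" by (simp add: dist_real_def)
  qed
qed

end

lemma coeff_char:
  "coeff (char_poly m a) j = (if j < m - 1 then complex_of_real (a (j + 1)) else if j = m - 1 then 1 else 0)"
proof -
  have "(\<Sum>k\<in>{1..m-1}. coeff (monom (complex_of_real (a k)) (k - 1)) j)
      = (\<Sum>k\<in>{1..m-1}. if k = j + 1 then complex_of_real (a k) else 0)"
    by (intro sum.cong refl) (auto simp: coeff_monom)
  also have "\<dots> = (if j + 1 \<in> {1..m-1} then complex_of_real (a (j + 1)) else 0)"
    by (rule sum.delta) simp
  finally have s: "(\<Sum>k\<in>{1..m-1}. coeff (monom (complex_of_real (a k)) (k - 1)) j)
      = (if j < m - 1 then complex_of_real (a (j + 1)) else 0)" by auto
  show ?thesis unfolding char_poly_def coeff_add coeff_sum s by (auto simp: coeff_monom)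
qed

lemma degree_char:
  assumes "m \<ge> 2" shows "degree (char_poly m a) = m - 1"
proof (rule antisym)
  show "degree (char_poly m a) \<le> m - 1" by (rule degree_le) (auto simp: coeff_char)
  show "m - 1 \<le> degree (char_poly m a)" by (rule le_degree) (simp add: coeff_char)
qed

context sys begin

lemma final_conv:
  assumes N: "N > 0" and i: "i < N"
  shows "\<forall>l<m. ((\<lambda>t. x i t l) \<longlongrightarrow> (if l = 0 then ybar / a 1 else 0)) at_top"
proof -
  define n where "n = m - 1"
  define p where "p = char_poly m a"
  have n1: "n \<ge> 1" and mn: "m = Suc n" using m2 by (auto simp: n_def)
  have degp: "degree p = n" unfolding p_def n_def by (rule degree_char[OF m2])
  have lcp: "lead_coeff p = 1" using degp by (simp add: p_def coeff_char n_def)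
  have cp: "coeff p k = complex_of_real (a (k + 1))" if "k < n" for k
    using that by (simp add: p_def coeff_char n_def)
  have a1: "a 1 \<noteq> 0"
  proof
    assume "a 1 = 0"
    then have "poly p 0 = 0" using cp[of 0] n1 by (simp add: poly_0_coeff_0)
    then show False using hurwitz unfolding p_def by force
  qed
  define w where "w l t = complex_of_real (x i t l)" for l t
  define yc where "yc t = complex_of_real (y i t)" for t
  have yrow: "y i t = (\<Sum>k<n. a (k + 1) * x i t k) + x i t n" for t
    unfolding y_def rowmul_def by (simp add: mn K2_def)
  have wc: "\<forall>l<n. continuous_on {0..} (w l)"
    using cont i mn unfolding w_def[abs_def] by (auto intro!: continuous_intros)
  have wd: "\<forall>t. 0 < t \<longrightarrow> t \<notin> range ts \<longrightarrow> (\<forall>l<n. (w l has_vector_derivative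
            (if Suc l < n then w (Suc l) t else yc t - (\<Sum>k<n. coeff p k * w k t))) (at t))"
  proof (intro allI impI)
    fix t l assume t: "0 < t" "t \<notin> range ts" and l: "l < n"
    have "((\<lambda>s. x i s l) has_real_derivative closed_loop N m a \<alpha> (\<sigma> t) (\<lambda>j. x j t) i l) (at t)"
      using deriv_x[OF t i] l mn by simp
    moreover have "closed_loop N m a \<alpha> (\<sigma> t) (\<lambda>j. x j t) i l = x i t (Suc l)"
      using l mn by (simp add: closed_loop_def Amul_def Bmul_def)
    ultimately have d: "((\<lambda>s. x i s l) has_real_derivative x i t (Suc l)) (at t)" by simp
    have "x i t (Suc l) = (if Suc l < n then x i t (Suc l) else y i t - (\<Sum>k<n. a (k + 1) * x i t k))"
    proof (cases "Suc l < n")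
      case False then have "Suc l = n" using l by simp
      then show ?thesis using yrow[of t] by simp
    qed simp
    then have "complex_of_real (x i t (Suc l)) =
        (if Suc l < n then w (Suc l) t else yc t - (\<Sum>k<n. coeff p k * w k t))"
      by (auto simp: w_def yc_def cp)
    then show "(w l has_vector_derivative
            (if Suc l < n then w (Suc l) t else yc t - (\<Sum>k<n. coeff p k * w k t))) (at t)"
      using has_vector_derivative_of_real[OF d] unfolding w_def[abs_def] by simp
  qed
  have yl: "(yc \<longlongrightarrow> complex_of_real ybar) at_top"
    unfolding yc_def[abs_def] by (intro tendsto_of_real y_conv[OF N i])
  have hp: "\<forall>z. poly p z = 0 \<longrightarrow> Re z < 0" using hurwitz unfolding p_def .
  have lim: "\<forall>l<n. (w l \<longlongrightarrow> (if l = 0 then complex_of_real ybar / coeff p 0 else 0)) at_top"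
    by (rule chain_conv[OF degp n1 lcp hp E_fin wc wd yl])
  have xl: "((\<lambda>t. x i t l) \<longlongrightarrow> (if l = 0 then ybar / a 1 else 0)) at_top" if l: "l < n" for l
  proof -
    have "(w l \<longlongrightarrow> complex_of_real (if l = 0 then ybar / a 1 else 0)) at_top"
      using lim l cp[of 0] n1 by (auto simp: of_real_divide)
    then show ?thesis unfolding w_def[abs_def] tendsto_of_real_iff .
  qed
  have xn: "((\<lambda>t. x i t n) \<longlongrightarrow> 0) at_top"
  proof -
    have e: "(\<lambda>t. x i t n) = (\<lambda>t. y i t - (\<Sum>k<n. a (k + 1) * x i t k))" using yrow by (auto simp: fun_eq_iff)
    have "((\<lambda>t. y i t - (\<Sum>k<n. a (k + 1) * x i t k)) \<longlongrightarrow>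
        ybar - (\<Sum>k<n. a (k + 1) * (if k = 0 then ybar / a 1 else 0))) at_top"
      by (intro tendsto_intros y_conv[OF N i] xl) auto
    moreover have "(\<Sum>k<n. a (k + 1) * (if k = 0 then ybar / a 1 else 0)) = ybar"
    proof -
      have "(\<Sum>k<n. a (k + 1) * (if k = 0 then ybar / a 1 else 0)) = (\<Sum>k<n. if k = 0 then ybar else 0)"
        using a1 by (intro sum.cong refl) auto
      also have "\<dots> = ybar" using n1 by (subst sum.delta) auto
      finally show ?thesis .
    qed
    ultimately show ?thesis unfolding e by simp
  qed
  show ?thesis
  proof (intro allI impI)
    fix l assume "l < m"
    then have "l < n \<or> l = n" using mn by auto
    then show "((\<lambda>t. x i t l) \<longlongrightarrow> (if l = 0 then ybar / a 1 else 0)) at_top"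
    proof
      assume "l < n" then show ?thesis by (rule xl)
    next
      assume "l = n" then show ?thesis using xn n1 by simp
    qed
  qed
qed

end

theorem mainTheorem3:
  fixes N m :: nat and a :: "nat \<Rightarrow> real"
    and S :: "'k set" and \<alpha> :: "'k \<Rightarrow> nat \<Rightarrow> nat \<Rightarrow> real"
    and \<sigma> :: "real \<Rightarrow> 'k" and \<tau>D :: real and ts :: "nat \<Rightarrow> real"
    and x :: "nat \<Rightarrow> real \<Rightarrow> nat \<Rightarrow> real"
  assumes m2: "m \<ge> 2"
    and hurwitz: "\<forall>z. poly (char_poly m a) z = 0 \<longrightarrow> Re z < 0"
    and finS: "finite S"
    and weights_nonneg: "\<forall>k\<in>S. \<forall>i j. \<alpha> k i j \<ge> 0"
    and no_loops: "\<forall>k\<in>S. \<forall>i. \<alpha> k i i = 0"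
    and sigma_in: "\<forall>t\<ge>0. \<sigma> t \<in> S"
    and dwell: "\<tau>D > 0" "dwell_switching \<tau>D \<sigma> ts"
    and conn: "UJQSC N \<alpha> \<sigma>"
    and bal: "\<forall>k\<in>S. balanced N \<alpha> k"
    and cont: "\<forall>i<N. \<forall>l<m. continuous_on {0..} (\<lambda>t. x i t l)"
    and ode: "\<forall>n t. ts n < t \<and> t < ts (Suc n) \<longrightarrow>
               (\<forall>i<N. \<forall>l<m. ((\<lambda>s. x i s l) has_real_derivative
                   closed_loop N m a \<alpha> (\<sigma> t) (\<lambda>j. x j t) i l) (at t))"
  shows "\<forall>i<N. \<forall>l<m. ((\<lambda>t. x i t l) \<longlongrightarrow>
           (if l = 0 then (1 / (a 1 * real N)) * (\<Sum>j<N. rowmul m (K2 m a) (x j 0)) else 0)) at_top"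
proof -
  interpret sys N m a S \<alpha> \<sigma> \<tau>D ts x
    by (unfold_locales) (rule assms)+
  show ?thesis
  proof (intro allI impI)
    fix i l assume i: "i < N" and l: "l < m"
    have N: "N > 0" using i by simp
    have eq: "(if l = 0 then ybar / a 1 else 0) =
        (if l = 0 then (1 / (a 1 * real N)) * (\<Sum>j<N. rowmul m (K2 m a) (x j 0)) else 0)"
      by (simp add: ybar_def y_def)
    have lim: "((\<lambda>t. x i t l) \<longlongrightarrow> (if l = 0 then ybar / a 1 else 0)) at_top"
      using final_conv[OF N i] l by blast
    show "((\<lambda>t. x i t l) \<longlongrightarrow>
           (if l = 0 then (1 / (a 1 * real N)) * (\<Sum>j<N. rowmul m (K2 m a) (x j 0)) else 0)) at_top"
      unfolding eq[symmetric] by (rule lim)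
  qed
qed

end
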